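(* Let $\lambda<\mathfrak u$ be a cardinal and let $X$ be a set of reals with $X=\bigcup_{\alpha<\lambda}X_\alpha$, where each subspace $X_\alpha$ satisfies $\mathrm{Split}(\mathrm T,\mathrm T)$. Then $X$ satisfies $\mathrm{Split}(\mathrm T,\mathrm T)$. The same holds with $\mathrm{Split}(B_{\mathrm T},B_{\mathrm T})$ in place of $\mathrm{Split}(\mathrm T,\mathrm T)$, and with $\mathrm{Split}(C_{\mathrm T},C_{\mathrm T})$ in place of $\mathrm{Split}(\mathrm T,\mathrm T)$. In particular these three properties are closed under countable unions.
   Context: A set of reals is an infinite topological space homeomorphic to a subset of $\mathbb R$. A cover of a space $X$ is a family $\mathcal U$ of subsets of $X$ with $\bigcup\mathcal U=X$ such that $X\not\subseteq U$ for all $U\in\mathcal U$. It is a $\tau$-cover if every $x\in X$ lies in infinitely many members and for all $x,y\in X$ at least one of $\{U\in\mathcal U: x\in U, y\notin U\}$, $\{U\in\mathcal U: y\in U, x\notin U\}$ is finite. $\mathrm T$ denotes the collection of open $\tau$-covers, $B_{\mathrm T}$ of countable Borel $\tau$-covers, $C_{\mathrm T}$ of countable clopen $\tau$-covers of $X$. $X$ satisfies $\mathrm{Split}(\mathfrak U,\mathfrak V)$ if every $\mathcal U\in\mathfrak U$ can be partitioned into two disjoint subfamilies each containing a subfamily belonging to $\mathfrak V$. $\mathfrak u$ is the minimal cardinality of a family $B$ of infinite subsets of $\mathbb N$ that is a base for a nonprincipal ultrafilter $U$ on $\mathbb N$, i.e. $U=\{a\subseteq\mathbb N:\exists b\in B\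 (b\setminus a\text{ finite})\}$. *)

theory Defs
  imports "HOL-Analysis.Analysis" "HOL-Library.Equipollence"
begin

definition nonprincipal_ultrafilter :: "nat set set \<Rightarrow> bool" where
  "nonprincipal_ultrafilter U \<longleftrightarrow>
     {} \<notin> U \<and> UNIV \<in> U \<and>
     (\<forall>a b. a \<in> U \<and> a \<subseteq> b \<longrightarrow> b \<in> U) \<and>
     (\<forall>a b. a \<in> U \<and> b \<in> U \<longrightarrow> a \<inter> b \<in> U) \<and>
     (\<forall>a. a \<in> U \<or> - a \<in> U) \<and>
     (\<forall>a. finite a \<longrightarrow> a \<notin> U)"

definition ultrafilter_base :: "nat set set \<Rightarrow> bool" where
  "ultrafilter_base B \<longleftrightarrow>
     (\<forall>b\<in>B. infinite b) \<and>
     nonprincipal_ultrafilter {a. \<exists>b\<in>B. finite (b - a)}"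

text \<open>The cardinality of I is below the ultrafilter number u: no ultrafilter
  base has cardinality at most |I|.\<close>
definition below_u :: "'i set \<Rightarrow> bool" where
  "below_u I \<longleftrightarrow> (\<forall>B. ultrafilter_base B \<longrightarrow> \<not> (B \<lesssim> I))"

definition is_cover :: "real set \<Rightarrow> real set set \<Rightarrow> bool" where
  "is_cover X \<U> \<longleftrightarrow> (\<forall>U\<in>\<U>. U \<subseteq> X) \<and> \<Union>\<U> = X \<and> (\<forall>U\<in>\<U>. \<not> X \<subseteq> U)"

definition tau_cover :: "real set \<Rightarrow> real set set \<Rightarrow> bool" where
  "tau_cover X \<U> \<longleftrightarrow> is_cover X \<U> \<and>
     (\<forall>x\<in>X. infinite {U\<in>\<U>. x \<in> U}) \<and>
     (\<forall>x\<in>X. \<forall>y\<in>X. finite {U\<in>\<U>. x \<in> U \<and> y \<notin> U} \<or> finite {U\<in>\<U>. y \<in> U \<and> x \<notin> U})"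

definition T_covers :: "real set \<Rightarrow> real set set set" where
  "T_covers X = {\<U>. tau_cover X \<U> \<and> (\<forall>U\<in>\<U>. openin (top_of_set X) U)}"

definition BT_covers :: "real set \<Rightarrow> real set set set" where
  "BT_covers X = {\<U>. tau_cover X \<U> \<and> countable \<U> \<and>
                      (\<forall>U\<in>\<U>. \<exists>B\<in>sets borel. U = X \<inter> B)}"

definition CT_covers :: "real set \<Rightarrow> real set set set" where
  "CT_covers X = {\<U>. tau_cover X \<U> \<and> countable \<U> \<and>
                      (\<forall>U\<in>\<U>. openin (top_of_set X) U \<and> closedin (top_of_set X) U)}"

definition Split :: "(real set \<Rightarrow> real set set set) \<Rightarrow> (real set \<Rightarrow> real set set set) \<Rightarrow> real set \<Rightarrow> bool" where
  "Split UU VV X \<longleftrightarrow>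
     (\<forall>\<U>\<in>UU X. \<exists>\<V>1 \<V>2. \<V>1 \<inter> \<V>2 = {} \<and> \<V>1 \<union> \<V>2 = \<U> \<and>
        (\<exists>\<W>. \<W> \<subseteq> \<V>1 \<and> \<W> \<in> VV X) \<and> (\<exists>\<W>. \<W> \<subseteq> \<V>2 \<and> \<W> \<in> VV X))"

end

theory Submission
  imports Defs
begin


definition occ :: "real set set \<Rightarrow> real \<Rightarrow> real set set" where
  "occ \<U> x = {V\<in>\<U>. x \<in> V}"

definition large :: "real set \<Rightarrow> real set set \<Rightarrow> real set set \<Rightarrow> bool" where
  "large X \<U> a \<longleftrightarrow> (\<exists>x\<in>X. finite (occ \<U> x - a))"

lemma tau_sub:
  assumes "tau_cover X \<U>" "\<W> \<subseteq> \<U>" "\<forall>x\<in>X. infinite (occ \<W> x)"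
  shows "tau_cover X \<W>"
proof -
  have a: "\<forall>U\<in>\<U>. U \<subseteq> X" "\<forall>U\<in>\<U>. \<not> X \<subseteq> U"
    and b: "\<forall>x\<in>X. \<forall>y\<in>X. finite {U\<in>\<U>. x \<in> U \<and> y \<notin> U} \<or> finite {U\<in>\<U>. y \<in> U \<and> x \<notin> U}"
    using assms(1) unfolding tau_cover_def is_cover_def by auto
  have "\<Union>\<W> = X"
  proof
    show "\<Union>\<W> \<subseteq> X" using a assms(2) by blast
    show "X \<subseteq> \<Union>\<W>"
    proof
      fix x assume "x \<in> X"
      then have "occ \<W> x \<noteq> {}" using assms(3) by (metis finite.emptyI)
      then show "x \<in> \<Union>\<W>" unfolding occ_def by blast
    qed
  qed
  moreover have "\<forall>x\<in>X. \<forall>y\<in>X. finite {U\<in>\<W>. x \<in> U \<and> y \<notin> U} \<or> finite {U\<in>\<W>. y \<in> U \<and> x \<notin> U}"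
  proof (intro ballI)
    fix x y assume "x \<in> X" "y \<in> X"
    then have "finite {U\<in>\<U>. x \<in> U \<and> y \<notin> U} \<or> finite {U\<in>\<U>. y \<in> U \<and> x \<notin> U}" using b by blast
    then show "finite {U\<in>\<W>. x \<in> U \<and> y \<notin> U} \<or> finite {U\<in>\<W>. y \<in> U \<and> x \<notin> U}"
    proof
      assume "finite {U\<in>\<U>. x \<in> U \<and> y \<notin> U}"
      then have "finite {U\<in>\<W>. x \<in> U \<and> y \<notin> U}" by (rule rev_finite_subset) (use assms(2) in blast)
      then show ?thesis by blast
    next
      assume "finite {U\<in>\<U>. y \<in> U \<and> x \<notin> U}"
      then have "finite {U\<in>\<W>. y \<in> U \<and> x \<notin> U}" by (rule rev_finite_subset) (use assms(2) in blast)
      then show ?thesis by blast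
    qed
  qed
  ultimately show ?thesis using a assms(2,3) unfolding tau_cover_def is_cover_def occ_def by blast
qed

lemma T_sub: "\<U> \<in> T_covers X \<Longrightarrow> \<W> \<subseteq> \<U> \<Longrightarrow> \<forall>x\<in>X. infinite (occ \<W> x) \<Longrightarrow> \<W> \<in> T_covers X"
  unfolding T_covers_def using tau_sub by blast

lemma BT_sub: "\<U> \<in> BT_covers X \<Longrightarrow> \<W> \<subseteq> \<U> \<Longrightarrow> \<forall>x\<in>X. infinite (occ \<W> x) \<Longrightarrow> \<W> \<in> BT_covers X"
  proof -
  assume a: "\<U> \<in> BT_covers X" "\<W> \<subseteq> \<U>" "\<forall>x\<in>X. infinite (occ \<W> x)"
  have u: "tau_cover X \<U>" "countable \<U>" using a(1) unfolding BT_covers_def mem_Collect_eq by blast+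
  have "tau_cover X \<W>" by (rule tau_sub[OF u(1) a(2,3)])
  moreover have "countable \<W>" by (rule countable_subset[OF a(2) u(2)])
  ultimately show ?thesis using a(1,2) unfolding BT_covers_def mem_Collect_eq by (elim conjE, intro conjI) blast+
qed

lemma CT_sub: "\<U> \<in> CT_covers X \<Longrightarrow> \<W> \<subseteq> \<U> \<Longrightarrow> \<forall>x\<in>X. infinite (occ \<W> x) \<Longrightarrow> \<W> \<in> CT_covers X"
  proof -
  assume a: "\<U> \<in> CT_covers X" "\<W> \<subseteq> \<U>" "\<forall>x\<in>X. infinite (occ \<W> x)"
  have u: "tau_cover X \<U>" "countable \<U>" using a(1) unfolding CT_covers_def mem_Collect_eq by blast+
  have "tau_cover X \<W>" by (rule tau_sub[OF u(1) a(2,3)])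
  moreover have "countable \<W>" by (rule countable_subset[OF a(2) u(2)])
  ultimately show ?thesis using a(1,2) unfolding CT_covers_def mem_Collect_eq by (elim conjE, intro conjI) blast+
qed

lemma T_trace:
  assumes "\<U> \<in> T_covers Z" "Y \<subseteq> Z" "tau_cover Y \<T>" "\<T> \<subseteq> (\<lambda>U. U \<inter> Y) ` \<U>"
  shows "\<T> \<in> T_covers Y"
proof -
  have "openin (top_of_set Y) V" if V: "V \<in> \<T>" for V
  proof -
    obtain U where U: "U \<in> \<U>" "V = U \<inter> Y" using assms(4) V by blast
    then obtain Ob where "open Ob" "U = Z \<inter> Ob" using assms(1) unfolding T_covers_def openin_open by blast
    then have "V = Y \<inter> Ob" using U assms(2) by blast
    then show ?thesis using \<open>open Ob\<close> openin_open by blast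
  qed
  then show ?thesis using assms(3) unfolding T_covers_def by blast
qed

lemma BT_trace:
  assumes "\<U> \<in> BT_covers Z" "Y \<subseteq> Z" "tau_cover Y \<T>" "\<T> \<subseteq> (\<lambda>U. U \<inter> Y) ` \<U>"
  shows "\<T> \<in> BT_covers Y"
proof -
  have "\<exists>B\<in>sets borel. V = Y \<inter> B" if V: "V \<in> \<T>" for V
  proof -
    obtain U where U: "U \<in> \<U>" "V = U \<inter> Y" using assms(4) V by blast
    then obtain Ob where "Ob \<in> sets borel" "U = Z \<inter> Ob" using assms(1) unfolding BT_covers_def by blast
    then have "V = Y \<inter> Ob" using U assms(2) by blast
    then show ?thesis using \<open>Ob \<in> sets borel\<close> by blast
  qed
  moreover have "countable \<T>" using assms(1,4) unfolding BT_covers_def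
    by (metis (no_types, lifting) mem_Collect_eq countable_image countable_subset)
  ultimately show ?thesis using assms(3) unfolding BT_covers_def by blast
qed

lemma CT_trace:
  assumes "\<U> \<in> CT_covers Z" "Y \<subseteq> Z" "tau_cover Y \<T>" "\<T> \<subseteq> (\<lambda>U. U \<inter> Y) ` \<U>"
  shows "\<T> \<in> CT_covers Y"
proof -
  have "openin (top_of_set Y) V \<and> closedin (top_of_set Y) V" if V: "V \<in> \<T>" for V
  proof -
    obtain U where U: "U \<in> \<U>" "V = U \<inter> Y" using assms(4) V by blast
    then obtain Ob C where "open Ob" "U = Z \<inter> Ob" "closed C" "U = Z \<inter> C"
      using assms(1) unfolding CT_covers_def openin_open closedin_closed by blast
    then have "V = Y \<inter> Ob" "V = Y \<inter> C" using U assms(2) by blast+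
    then show ?thesis using \<open>open Ob\<close> \<open>closed C\<close> openin_open closedin_closed by blast
  qed
  moreover have "countable \<T>" using assms(1,4) unfolding CT_covers_def
    by (metis (no_types, lifting) mem_Collect_eq countable_image countable_subset)
  ultimately show ?thesis using assms(3) unfolding CT_covers_def by blast
qed




lemma occ_inf: "tau_cover X \<U> \<Longrightarrow> x \<in> X \<Longrightarrow> infinite (occ \<U> x)"
  unfolding tau_cover_def occ_def by blast

lemma occ_sub: "occ \<U> x \<subseteq> \<U>" unfolding occ_def by blast

lemma occ_comp: "tau_cover X \<U> \<Longrightarrow> x \<in> X \<Longrightarrow> y \<in> X \<Longrightarrow>
   finite (occ \<U> x - occ \<U> y) \<or> finite (occ \<U> y - occ \<U> x)"
proof -
  assume "tau_cover X \<U>" "x \<in> X" "y \<in> X"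
  then have "finite {U\<in>\<U>. x \<in> U \<and> y \<notin> U} \<or> finite {U\<in>\<U>. y \<in> U \<and> x \<notin> U}"
    unfolding tau_cover_def by blast
  moreover have "occ \<U> x - occ \<U> y = {U\<in>\<U>. x \<in> U \<and> y \<notin> U}"
    "occ \<U> y - occ \<U> x = {U\<in>\<U>. y \<in> U \<and> x \<notin> U}" unfolding occ_def by blast+
  ultimately show ?thesis by simp
qed

lemma large_inf: "tau_cover X \<U> \<Longrightarrow> large X \<U> a \<Longrightarrow> infinite (\<U> \<inter> a)"
proof -
  assume t: "tau_cover X \<U>" and "large X \<U> a"
  then obtain x where x: "x \<in> X" "finite (occ \<U> x - a)" unfolding large_def by blast
  have "occ \<U> x \<subseteq> (occ \<U> x - a) \<union> (\<U> \<inter> a)" using occ_sub by blast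
  then show ?thesis using occ_inf[OF t x(1)] x(2) by (meson finite_Un finite_subset)
qed

lemma large_mono: "large X \<U> a \<Longrightarrow> a \<subseteq> b \<Longrightarrow> large X \<U> b"
  unfolding large_def by (meson Diff_mono finite_subset order_refl)

lemma large_int: "tau_cover X \<U> \<Longrightarrow> large X \<U> a \<Longrightarrow> large X \<U> b \<Longrightarrow> large X \<U> (a \<inter> b)"
proof -
  assume t: "tau_cover X \<U>" and "large X \<U> a" "large X \<U> b"
  then obtain x y where x: "x \<in> X" "finite (occ \<U> x - a)" and y: "y \<in> X" "finite (occ \<U> y - b)"
    unfolding large_def by blast
  from occ_comp[OF t x(1) y(1)] show ?thesis
  proof
    assume f: "finite (occ \<U> x - occ \<U> y)"
    have "occ \<U> x - (a \<inter> b) \<subseteq> (occ \<U> x - a) \<union> (occ \<U> x - occ \<U> y) \<union> (occ \<U> y - b)" by blast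
    then show ?thesis using f x y unfolding large_def by (meson finite_Un finite_subset)
  next
    assume f: "finite (occ \<U> y - occ \<U> x)"
    have "occ \<U> y - (a \<inter> b) \<subseteq> (occ \<U> y - b) \<union> (occ \<U> y - occ \<U> x) \<union> (occ \<U> x - a)" by blast
    then show ?thesis using f x y unfolding large_def by (meson finite_Un finite_subset)
  qed
qed

lemma large_fin_int:
  assumes t: "tau_cover X \<U>" and ne: "X \<noteq> {}" and K: "finite K"
  shows "(\<forall>k\<in>K. large X \<U> (g k)) \<Longrightarrow> large X \<U> (\<U> \<inter> \<Inter>(g ` K))"
  using K
proof (induction K rule: finite_induct)
  case empty
  obtain x where "x \<in> X" using ne by blast
  moreover have "occ \<U> x - (\<U> \<inter> \<Inter>(g ` {})) = {}" using occ_sub by auto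
  ultimately show ?case unfolding large_def by (metis finite.emptyI)
next
  case (insert k K)
  then have "large X \<U> (g k \<inter> (\<U> \<inter> \<Inter>(g ` K)))" using large_int[OF t] by simp
  moreover have "g k \<inter> (\<U> \<inter> \<Inter>(g ` K)) = \<U> \<inter> \<Inter>(g ` insert k K)" by auto
  ultimately show ?case by simp
qed

lemma caseB:
  fixes CC :: "real set \<Rightarrow> real set set set"
  assumes H2: "\<And>Y \<V>. \<V> \<in> CC Y \<Longrightarrow> tau_cover Y \<V>"
  and H3: "\<And>Y Z \<V> \<T>. \<V> \<in> CC Z \<Longrightarrow> Y \<subseteq> Z \<Longrightarrow> tau_cover Y \<T> \<Longrightarrow> \<T> \<subseteq> (\<lambda>U. U \<inter> Y) ` \<V> \<Longrightarrow> \<T> \<in> CC Y"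
  and U: "\<U> \<in> CC X"
  and ultra: "\<And>W. W \<subseteq> \<U> \<Longrightarrow> large X \<U> W \<or> large X \<U> (\<U> - W)"
  and Y: "Y \<subseteq> X" and spl: "Split CC CC Y"
  and b: "\<forall>x\<in>X. \<exists>y\<in>Y. finite (occ \<U> y - occ \<U> x)"
  and Xne: "X \<noteq> {}"
  shows False
proof -
  have t: "tau_cover X \<U>" using H2 U .
  have bL: "\<exists>z\<in>Y. finite (occ \<U> z - L)" if L: "large X \<U> L" for L
  proof -
    obtain x where x: "x \<in> X" "finite (occ \<U> x - L)" using L unfolding large_def by blast
    obtain y where y: "y \<in> Y" "finite (occ \<U> y - occ \<U> x)" using b x(1) by blast
    have "occ \<U> y - L \<subseteq> (occ \<U> y - occ \<U> x) \<union> (occ \<U> x - L)" by blast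
    then show ?thesis using x y by (meson finite_Un finite_subset)
  qed
  have Yne: "Y \<noteq> {}" using b Xne by blast
  define P where "P = {U\<in>\<U>. Y \<subseteq> U}"
  have Pfin: "finite P"
  proof (rule ccontr)
    assume "infinite P"
    then obtain H H' where H: "H \<subseteq> P" "H' \<subseteq> P" "infinite H" "infinite H'" "H \<inter> H' = {}" by (rule infinite_split)
    have "H \<subseteq> \<U>" using H(1) P_def by blast
    from ultra[OF this] obtain L where L: "large X \<U> L" "L = H \<or> L = \<U> - H" by blast
    then obtain z where z: "z \<in> Y" "finite (occ \<U> z - L)" using bL by blast
    have "P \<subseteq> occ \<U> z" using z(1) unfolding P_def occ_def by blast
    then have "finite (P - L)" using z(2) by (meson Diff_mono finite_subset order_refl)
    moreover have "H' \<subseteq> P - H" "H \<subseteq> P - (\<U> - H)" using H \<open>H \<subseteq> \<U>\<close> by blast+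
    ultimately show False using L(2) H by (metis finite_subset)
  qed
  define S where "S = \<U> - P"
  define f where "f = (\<lambda>U::real set. U \<inter> Y)"
  define \<T> where "\<T> = f ` S"
  have occT: "occ \<T> y = f ` (occ \<U> y \<inter> S)" if "y \<in> Y" for y
    using that unfolding occ_def \<T>_def f_def S_def by auto
  have largeS: "large X \<U> S"
  proof -
    obtain x where "x \<in> X" using Xne by blast
    have "occ \<U> x - S \<subseteq> P" unfolding S_def occ_def by blast
    then show ?thesis using \<open>x \<in> X\<close> Pfin unfolding large_def by (meson finite_subset)
  qed
  have Tinf: "infinite (occ \<T> y)" if y: "y \<in> Y" for y
  proof
    assume fin: "finite (occ \<T> y)"
    define K where "K = occ \<T> y"
    define F where "F = (\<lambda>V. {U\<in>\<U>. f U = V})"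
    have nl: "large X \<U> (\<U> - F V)" if V: "V \<in> K" for V
    proof -
      obtain U where U: "U \<in> S" "V = f U" using V occT[OF y] unfolding K_def by blast
      then have "\<not> Y \<subseteq> V" unfolding S_def P_def f_def by blast
      then obtain z where z: "z \<in> Y" "z \<notin> V" by blast
      have "\<not> large X \<U> (F V)"
      proof
        assume "large X \<U> (F V)"
        moreover have "large X \<U> (occ \<U> z)" unfolding large_def using z(1) Y by (metis Diff_cancel finite.emptyI subsetD)
        ultimately have "infinite (\<U> \<inter> (F V \<inter> occ \<U> z))" using large_int[OF t] large_inf[OF t] by blast
        then obtain U' where "U' \<in> F V" "U' \<in> occ \<U> z" by (metis Int_iff finite.emptyI ex_in_conv)
        then show False using z unfolding F_def occ_def f_def by blast
      qed
      then show ?thesis using ultra[of "F V"] unfolding F_def by blast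
    qed
    have "large X \<U> (\<U> \<inter> \<Inter>((\<lambda>V. \<U> - F V) ` K))"
      using large_fin_int[OF t Xne, of K "\<lambda>V. \<U> - F V"] fin nl unfolding K_def by blast
    moreover have "large X \<U> (occ \<U> y)" unfolding large_def using y Y by (metis Diff_cancel finite.emptyI subsetD)
    ultimately have "large X \<U> ((occ \<U> y \<inter> S) \<inter> (\<U> \<inter> \<Inter>((\<lambda>V. \<U> - F V) ` K)))"
      using large_int[OF t] largeS by blast
    then have "infinite (\<U> \<inter> ((occ \<U> y \<inter> S) \<inter> (\<U> \<inter> \<Inter>((\<lambda>V. \<U> - F V) ` K))))" using large_inf[OF t] by blast
    then obtain U where U: "U \<in> occ \<U> y \<inter> S" "U \<in> \<Inter>((\<lambda>V. \<U> - F V) ` K)" by (metis Int_iff finite.emptyI ex_in_conv)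
    then have "f U \<in> K" using occT[OF y] unfolding K_def by blast
    then have "U \<notin> F (f U)" using U(2) by blast
    moreover have "U \<in> F (f U)" using U(1) unfolding F_def occ_def by blast
    ultimately show False by blast
  qed
  have Ttau: "tau_cover Y \<T>"
  unfolding tau_cover_def is_cover_def
  proof (intro conjI ballI)
    show "V \<subseteq> Y" if "V \<in> \<T>" for V using that unfolding \<T>_def f_def by blast
    show "\<not> Y \<subseteq> V" if "V \<in> \<T>" for V using that unfolding \<T>_def f_def S_def P_def by blast
    show "infinite {U \<in> \<T>. y \<in> U}" if "y \<in> Y" for y using Tinf[OF that] unfolding occ_def .
    show "\<Union>\<T> = Y"
    proof
      show "\<Union>\<T> \<subseteq> Y" unfolding \<T>_def f_def by blast
      show "Y \<subseteq> \<Union>\<T>"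
      proof
        fix y assume "y \<in> Y"
        then have "occ \<T> y \<noteq> {}" using Tinf by (metis finite.emptyI)
        then show "y \<in> \<Union>\<T>" unfolding occ_def by blast
      qed
    qed
  next
    fix y z assume yz: "y \<in> Y" "z \<in> Y"
    have sub: "{V\<in>\<T>. a \<in> V \<and> c \<notin> V} \<subseteq> f ` {U\<in>\<U>. a \<in> U \<and> c \<notin> U}" if "c \<in> Y" for a c
      using that unfolding \<T>_def f_def S_def by blast
    have "finite {U\<in>\<U>. y \<in> U \<and> z \<notin> U} \<or> finite {U\<in>\<U>. z \<in> U \<and> y \<notin> U}"
      using t yz Y unfolding tau_cover_def by blast
    then show "finite {V\<in>\<T>. y \<in> V \<and> z \<notin> V} \<or> finite {V\<in>\<T>. z \<in> V \<and> y \<notin> V}"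
      using sub[OF yz(2), of y] sub[OF yz(1), of z] by (meson finite_imageI finite_subset)
  qed
  have "\<T> \<subseteq> (\<lambda>U. U \<inter> Y) ` \<U>" unfolding \<T>_def f_def S_def by blast
  then have TC: "\<T> \<in> CC Y" using H3[OF U Y Ttau] by blast
  from spl[unfolded Split_def, rule_format, OF TC] obtain V1 V2 where V0: "V1 \<inter> V2 = {}" "V1 \<union> V2 = \<T>"
    and e1: "\<exists>W. W \<subseteq> V1 \<and> W \<in> CC Y" and e2: "\<exists>W. W \<subseteq> V2 \<and> W \<in> CC Y" by blast
  from e1 obtain W1 where W1: "W1 \<subseteq> V1" "W1 \<in> CC Y" by blast
  from e2 obtain W2 where W2: "W2 \<subseteq> V2" "W2 \<in> CC Y" by blast
  note V = V0 W1 W2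
  have W1inf: "infinite (occ W1 z)" if "z \<in> Y" for z using H2[OF V(4)] that unfolding tau_cover_def occ_def by (elim conjE) (rule bspec)
  have W2inf: "infinite (occ W2 z)" if "z \<in> Y" for z using H2[OF V(6)] that unfolding tau_cover_def occ_def by (elim conjE) (rule bspec)
  define W where "W = {U\<in>S. f U \<in> W1}"
  have "W \<subseteq> \<U>" unfolding W_def S_def by blast
  from ultra[OF this] show False
  proof
    assume "large X \<U> W"
    then obtain z where z: "z \<in> Y" "finite (occ \<U> z - W)" using bL by blast
    have "occ W2 z \<subseteq> f ` (occ \<U> z - W)"
    proof
      fix V assume V2: "V \<in> occ W2 z"
      then have "V \<in> \<T>" "V \<notin> W1" "z \<in> V" using V unfolding occ_def by blast+
      then obtain U where U: "U \<in> S" "V = f U" unfolding \<T>_def by blast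
      then show "V \<in> f ` (occ \<U> z - W)" using \<open>V \<notin> W1\<close> \<open>z \<in> V\<close> unfolding W_def occ_def f_def S_def by blast
    qed
    then show False using W2inf[OF z(1)] z(2) by (meson finite_imageI finite_subset)
  next
    assume "large X \<U> (\<U> - W)"
    then obtain z where z: "z \<in> Y" "finite (occ \<U> z - (\<U> - W))" using bL by blast
    have "occ W1 z \<subseteq> f ` (occ \<U> z - (\<U> - W))"
    proof
      fix V assume V1: "V \<in> occ W1 z"
      then have "V \<in> \<T>" "V \<in> W1" "z \<in> V" using V unfolding occ_def by blast+
      then obtain U where U: "U \<in> S" "V = f U" unfolding \<T>_def by blast
      then show "V \<in> f ` (occ \<U> z - (\<U> - W))" using \<open>V \<in> W1\<close> \<open>z \<in> V\<close> unfolding W_def occ_def f_def S_def by blast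
    qed
    then show False using W1inf[OF z(1)] z(2) by (meson finite_imageI finite_subset)
  qed
qed

lemma main:
  fixes CC :: "real set \<Rightarrow> real set set set" and I :: "'i set" and Xs :: "'i \<Rightarrow> real set"
  assumes H2: "\<And>Y \<V>. \<V> \<in> CC Y \<Longrightarrow> tau_cover Y \<V>"
  and H3: "\<And>Y Z \<V> \<T>. \<V> \<in> CC Z \<Longrightarrow> Y \<subseteq> Z \<Longrightarrow> tau_cover Y \<T> \<Longrightarrow> \<T> \<subseteq> (\<lambda>U. U \<inter> Y) ` \<V> \<Longrightarrow> \<T> \<in> CC Y"
  and U: "\<U> \<in> CC X" "countable \<U>"
  and X: "X = (\<Union>\<alpha>\<in>I. Xs \<alpha>)" and Xne: "X \<noteq> {}"
  and bu: "below_u I" and sp: "\<forall>\<alpha>\<in>I. Split CC CC (Xs \<alpha>)"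
  shows "\<exists>W\<subseteq>\<U>. \<forall>x\<in>X. infinite (occ W x) \<and> infinite (occ (\<U> - W) x)"
proof (rule ccontr)
  assume nW: "\<not> ?thesis"
  have t: "tau_cover X \<U>" using H2 U(1) .
  have ultra: "large X \<U> W \<or> large X \<U> (\<U> - W)" if W: "W \<subseteq> \<U>" for W
  proof -
    obtain x where x: "x \<in> X" "finite (occ W x) \<or> finite (occ (\<U> - W) x)" using nW W by blast
    have "occ W x = occ \<U> x - (\<U> - W)" "occ (\<U> - W) x = occ \<U> x - W" using W unfolding occ_def by blast+
    then show ?thesis using x unfolding large_def by metis
  qed
  show False
  proof (cases "\<exists>\<alpha>\<in>I. \<forall>x\<in>X. \<exists>y\<in>Xs \<alpha>. finite (occ \<U> y - occ \<U> x)")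
    case True
    then obtain \<alpha> where a: "\<alpha> \<in> I" "\<forall>x\<in>X. \<exists>y\<in>Xs \<alpha>. finite (occ \<U> y - occ \<U> x)" by blast
    have Ysub: "Xs \<alpha> \<subseteq> X" using X a(1) by blast
    show False by (rule caseB[where CC=CC and X=X and Y="Xs \<alpha>" and \<U>=\<U>, OF H2 H3 U(1) ultra Ysub]) (use sp a Xne in auto)
  next
    case False
    then have "\<forall>\<alpha>\<in>I. \<exists>x\<in>X. \<forall>y\<in>Xs \<alpha>. infinite (occ \<U> y - occ \<U> x)" by blast
    then obtain c where c: "\<And>\<alpha>. \<alpha> \<in> I \<Longrightarrow> c \<alpha> \<in> X \<and> (\<forall>y\<in>Xs \<alpha>. infinite (occ \<U> y - occ \<U> (c \<alpha>)))" by metis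
    have gen: "\<exists>\<alpha>\<in>I. finite (occ \<U> (c \<alpha>) - occ \<U> x)" if x: "x \<in> X" for x
    proof -
      obtain \<alpha> where a: "\<alpha> \<in> I" "x \<in> Xs \<alpha>" using x X by blast
      then have "infinite (occ \<U> x - occ \<U> (c \<alpha>))" using c by blast
      then have "finite (occ \<U> (c \<alpha>) - occ \<U> x)" using occ_comp[OF t x, of "c \<alpha>"] c a(1) by blast
      then show ?thesis using a(1) by blast
    qed
    obtain x0 where x0: "x0 \<in> X" using Xne by blast
    have Uinf: "infinite \<U>" using occ_inf[OF t x0] occ_sub[of \<U> x0] finite_subset by blast
    define e where "e = from_nat_into \<U>"
    have bij: "bij_betw e UNIV \<U>" unfolding e_def using bij_betw_from_nat_into U(2) Uinf by blast
    then have inj: "inj e" and rng: "range e = \<U>" unfolding bij_betw_def by auto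
    have fin1: "finite (e -` S)" if "finite S" for S using finite_vimageI[OF that inj] .
    have fin2: "finite S" if S: "S \<subseteq> \<U>" "finite (e -` S)" for S
    proof -
      have "S = e ` (e -` S)" using S(1) rng by blast
      then show ?thesis using S(2) by (metis finite_imageI)
    qed
    define b where "b = (\<lambda>\<alpha>. e -` occ \<U> (c \<alpha>))"
    define B where "B = b ` I"
    define F where "F = {a. \<exists>b\<in>B. finite (b - a)}"
    have binf: "infinite (b \<alpha>)" if "\<alpha> \<in> I" for \<alpha>
      using fin2[OF occ_sub] occ_inf[OF t] c[OF that] unfolding b_def by blast
    have key: "finite (b \<alpha> - e -` Z)" if "finite (occ \<U> (c \<alpha>) - Z)" for \<alpha> Z
    proof -
      have "b \<alpha> - e -` Z = e -` (occ \<U> (c \<alpha>) - Z)" unfolding b_def by blast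
      then show ?thesis using fin1[OF that] by simp
    qed
    have Ine: "I \<noteq> {}" using X Xne by blast
    have "ultrafilter_base B"
      unfolding ultrafilter_base_def nonprincipal_ultrafilter_def F_def[symmetric]
    proof (intro conjI allI impI)
      show "\<forall>b\<in>B. infinite b" using binf unfolding B_def by blast
      show "{} \<notin> F" using binf unfolding F_def B_def by auto
      show "UNIV \<in> F" using Ine unfolding F_def B_def by auto
      show "a' \<in> F" if aa: "a \<in> F \<and> a \<subseteq> a'" for a a'
      proof -
        from aa obtain bb where bb: "bb \<in> B" "finite (bb - a)" unfolding F_def by blast
        have "bb - a' \<subseteq> bb - a" using aa by blast
        then have "finite (bb - a')" using bb(2) finite_subset by blast
        then show ?thesis using bb(1) unfolding F_def by blast
      qed
      show "a1 \<inter> a2 \<in> F" if aa: "a1 \<in> F \<and> a2 \<in> F" for a1 a2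
      proof -
        obtain \<alpha>1 \<alpha>2 where a: "\<alpha>1 \<in> I" "\<alpha>2 \<in> I" "finite (b \<alpha>1 - a1)" "finite (b \<alpha>2 - a2)"
          using aa unfolding F_def B_def by blast
        have "finite (occ \<U> (c \<alpha>1) - occ \<U> (c \<alpha>2)) \<or> finite (occ \<U> (c \<alpha>2) - occ \<U> (c \<alpha>1))"
          using occ_comp[OF t] c a(1,2) by blast
        then show ?thesis
        proof
          assume "finite (occ \<U> (c \<alpha>1) - occ \<U> (c \<alpha>2))"
          then have f: "finite (b \<alpha>1 - b \<alpha>2)" using key[of \<alpha>1 "occ \<U> (c \<alpha>2)"] unfolding b_def by simp
          have "b \<alpha>1 - (a1 \<inter> a2) \<subseteq> (b \<alpha>1 - a1) \<union> (b \<alpha>1 - b \<alpha>2) \<union> (b \<alpha>2 - a2)" by blast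
          then have "finite (b \<alpha>1 - (a1 \<inter> a2))" using f a by (meson finite_Un finite_subset)
          then show ?thesis using a(1) unfolding F_def B_def by blast
        next
          assume "finite (occ \<U> (c \<alpha>2) - occ \<U> (c \<alpha>1))"
          then have f: "finite (b \<alpha>2 - b \<alpha>1)" using key[of \<alpha>2 "occ \<U> (c \<alpha>1)"] unfolding b_def by simp
          have "b \<alpha>2 - (a1 \<inter> a2) \<subseteq> (b \<alpha>2 - a2) \<union> (b \<alpha>2 - b \<alpha>1) \<union> (b \<alpha>1 - a1)" by blast
          then have "finite (b \<alpha>2 - (a1 \<inter> a2))" using f a by (meson finite_Un finite_subset)
          then show ?thesis using a(2) unfolding F_def B_def by blast
        qed
      qed
      show "a \<in> F \<or> - a \<in> F" for a
      proof -
        define W where "W = e ` a"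
        have W: "W \<subseteq> \<U>" unfolding W_def using rng by blast
        have vW: "e -` W = a" "e -` (\<U> - W) = - a" unfolding W_def using inj rng
          by (auto simp: inj_eq)
        have gen2: "\<exists>\<alpha>\<in>I. finite (b \<alpha> - e -` Z)" if "large X \<U> Z" for Z
        proof -
          obtain x where x: "x \<in> X" "finite (occ \<U> x - Z)" using \<open>large X \<U> Z\<close> unfolding large_def by blast
          obtain \<alpha> where \<alpha>: "\<alpha> \<in> I" "finite (occ \<U> (c \<alpha>) - occ \<U> x)" using gen[OF x(1)] by blast
          have "occ \<U> (c \<alpha>) - Z \<subseteq> (occ \<U> (c \<alpha>) - occ \<U> x) \<union> (occ \<U> x - Z)" by blast
          then have "finite (occ \<U> (c \<alpha>) - Z)" using x \<alpha> by (meson finite_Un finite_subset)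
          then show ?thesis using key \<alpha>(1) by blast
        qed
        from ultra[OF W] show ?thesis
        proof
          assume "large X \<U> W"
          then show ?thesis using gen2 vW unfolding F_def B_def by fastforce
        next
          assume "large X \<U> (\<U> - W)"
          then show ?thesis using gen2 vW unfolding F_def B_def by fastforce
        qed
      qed
      show "a \<notin> F" if fa: "finite a" for a
      proof
        assume "a \<in> F"
        then obtain \<alpha> where \<alpha>: "\<alpha> \<in> I" "finite (b \<alpha> - a)" unfolding F_def B_def by blast
        have "b \<alpha> \<subseteq> (b \<alpha> - a) \<union> a" by blast
        then show False using \<alpha> fa binf by (meson finite_Un finite_subset)
      qed
    qed
    moreover have "B \<lesssim> I" unfolding B_def by (rule image_lepoll)
    ultimately show False using bu unfolding below_u_def by blast
  qed
qed




fun pick :: "(nat \<Rightarrow> nat set) \<Rightarrow> nat \<Rightarrow> nat" where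
  "pick h 0 = (LEAST m. m \<in> h 0)"
| "pick h (Suc n) = (LEAST m. m \<in> h (Suc n) \<and> pick h n < m)"

lemma pick_in:
  assumes "\<And>n. infinite (h n)"
  shows "pick h n \<in> h n \<and> pick h n < pick h (Suc n)"
proof -
  have ex: "\<exists>m. m \<in> h k \<and> j < m" for k j using assms[of k] unfolding infinite_nat_iff_unbounded by blast
  have a: "pick h n \<in> h n"
  proof (cases n)
    case 0
    then show ?thesis using ex[of 0 0] by (auto intro: LeastI_ex)
  next
    case (Suc k)
    then show ?thesis using LeastI_ex[OF ex[of n "pick h k"]] by simp
  qed
  have "pick h n < pick h (Suc n)" using LeastI_ex[OF ex[of "Suc n" "pick h n"]] by simp
  then show ?thesis using a by blast
qed

lemma countable_below_u:
  fixes I :: "'i set"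
  assumes "countable I"
  shows "below_u I"
  unfolding below_u_def
proof (intro allI impI notI)
  fix B assume ub: "ultrafilter_base B" and BI: "B \<lesssim> I"
  define F where "F = {a. \<exists>b\<in>B. finite (b - a)}"
  have binf: "\<forall>b\<in>B. infinite b" and nu: "nonprincipal_ultrafilter F"
    using ub unfolding ultrafilter_base_def F_def by blast+
  have "UNIV \<in> F" using nu unfolding nonprincipal_ultrafilter_def by blast
  then have Bne: "B \<noteq> {}" unfolding F_def by blast
  have cB: "countable B" using countable_lepoll[OF assms BI] .
  define g where "g = from_nat_into B"
  have rg: "range g = B" unfolding g_def using Bne cB by simp
  define h where "h = (\<lambda>n. g (fst (prod_decode (n div 2))))"
  have hinf: "infinite (h n)" for n using binf rg unfolding h_def by blast
  define r where "r = pick h"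
  have rh: "r n \<in> h n" and rs: "r n < r (Suc n)" for n using pick_in[of h n, OF hinf] unfolding r_def by blast+
  have sm: "strict_mono r" using rs by (simp add: strict_mono_Suc_iff)
  then have ir: "inj r" using strict_mono_imp_inj_on by blast
  define a where "a = range (\<lambda>k. r (2*k))"
  have split: "infinite (b \<inter> a) \<and> infinite (b - a)" if b: "b \<in> B" for b
  proof -
    obtain i where i: "g i = b" using b rg by blast
    define J where "J = range (\<lambda>k. prod_encode (i, k))"
    have "inj (\<lambda>k. prod_encode (i, k))" by (intro injI) (metis prod_encode_eq prod.inject)
    then have Jinf: "infinite J" unfolding J_def using finite_imageD by blast
    have hJ: "h (2*j) = b" "h (2*j+1) = b" if "j \<in> J" for j using that i unfolding J_def h_def by auto
    have i1: "inj_on (\<lambda>j. r (2*j)) J"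
    proof (rule inj_onI)
      fix x y assume "r (2*x) = r (2*y)"
      then have "2*x = 2*y" by (rule injD[OF ir])
      then show "x = y" by simp
    qed
    have i2: "inj_on (\<lambda>j. r (2*j+1)) J"
    proof (rule inj_onI)
      fix x y assume "r (2*x+1) = r (2*y+1)"
      then have "2*x+1 = 2*y+1" by (rule injD[OF ir])
      then show "x = y" by simp
    qed
    have s1: "(\<lambda>j. r (2*j)) ` J \<subseteq> b \<inter> a"
    proof
      fix v assume "v \<in> (\<lambda>j. r (2*j)) ` J"
      then obtain j where j: "j \<in> J" "v = r (2*j)" by blast
      have "v \<in> b" using hJ(1)[OF j(1)] rh[of "2*j"] j(2) by simp
      moreover have "v \<in> a" unfolding a_def using j(2) by blast
      ultimately show "v \<in> b \<inter> a" by blast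
    qed
    have s2: "(\<lambda>j. r (2*j+1)) ` J \<subseteq> b - a"
    proof
      fix v assume "v \<in> (\<lambda>j. r (2*j+1)) ` J"
      then obtain j where j: "j \<in> J" "v = r (2*j+1)" by blast
      have "v \<in> b" using hJ(2)[OF j(1)] rh[of "2*j+1"] j(2) by simp
      moreover have "v \<notin> a"
      proof
        assume "v \<in> a"
        then obtain k where "v = r (2*k)" unfolding a_def by blast
        then have "2*j+1 = 2*k" using j(2) ir by (metis injD)
        then show False by presburger
      qed
      ultimately show "v \<in> b - a" by blast
    qed
    have "infinite ((\<lambda>j. r (2*j)) ` J)" "infinite ((\<lambda>j. r (2*j+1)) ` J)"
      using Jinf i1 i2 finite_imageD by blast+
    then show ?thesis using s1 s2 finite_subset by blast
  qed
  have "a \<in> F \<or> - a \<in> F" using nu unfolding nonprincipal_ultrafilter_def by blast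
  then show False
  proof
    assume "a \<in> F"
    then obtain b where "b \<in> B" "finite (b - a)" unfolding F_def by blast
    then show False using split by blast
  next
    assume "- a \<in> F"
    then obtain b where "b \<in> B" "finite (b - - a)" unfolding F_def by blast
    moreover have "b - - a = b \<inter> a" by blast
    ultimately show False using split by auto
  qed
qed




lemma lindelof_tau:
  assumes U: "\<U> \<in> T_covers X"
  shows "\<exists>\<W>\<subseteq>\<U>. countable \<W> \<and> \<W> \<in> T_covers X"
proof -
  have t: "tau_cover X \<U>" and op: "\<And>U. U \<in> \<U> \<Longrightarrow> openin (top_of_set X) U"
    using U unfolding T_covers_def by blast+
  have exD: "\<exists>D. D \<subseteq> \<U> - C \<and> countable D \<and> \<Union>D = \<Union>(\<U> - C)" for C
  proof -
    obtain D where "D \<subseteq> \<U> - C" "countable D" "\<Union>D = \<Union>(\<U> - C)"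
      using Lindelof_openin[of "\<U> - C" X] op by blast
    then show ?thesis by blast
  qed
  define D where "D C = (SOME D. D \<subseteq> \<U> - C \<and> countable D \<and> \<Union>D = \<Union>(\<U> - C))" for C
  have Dp: "D C \<subseteq> \<U> - C" "countable (D C)" "\<Union>(D C) = \<Union>(\<U> - C)" for C
    using someI_ex[OF exD[of C]] unfolding D_def by blast+
  define Cs where "Cs n = ((\<lambda>C. C \<union> D C) ^^ n) {}" for n
  have Cs0: "Cs 0 = {}" and CsS: "Cs (Suc n) = Cs n \<union> D (Cs n)" for n unfolding Cs_def by simp_all
  have Csc: "countable (Cs n) \<and> Cs n \<subseteq> \<U>" for n
  proof (induction n)
    case 0 then show ?case using Cs0 by simp
  next
    case (Suc n) then show ?case using CsS[of n] Dp[of "Cs n"] by auto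
  qed
  have Csm: "Cs m \<subseteq> Cs n" if "m \<le> n" for m n using that
  proof (induction rule: dec_induct)
    case base then show ?case by simp
  next
    case (step k) then show ?case using CsS[of k] by blast
  qed
  define \<W> where "\<W> = (\<Union>n. Cs n)"
  have Wsub: "\<W> \<subseteq> \<U>" and Wc: "countable \<W>" using Csc unfolding \<W>_def by auto
  have bound: "finite F \<Longrightarrow> F \<subseteq> \<W> \<Longrightarrow> \<exists>N. F \<subseteq> Cs N" for F
  proof (induction F rule: finite_induct)
    case empty then show ?case by blast
  next
    case (insert V F)
    then obtain N where N: "F \<subseteq> Cs N" by blast
    obtain n where n: "V \<in> Cs n" using insert.prems unfolding \<W>_def by blast
    have "insert V F \<subseteq> Cs (max N n)" using N n Csm[of N "max N n"] Csm[of n "max N n"] by auto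
    then show ?case by blast
  qed
  have inf: "infinite (occ \<W> x)" if x: "x \<in> X" for x
  proof (cases "\<exists>n. occ \<U> x \<subseteq> Cs n")
    case True
    then obtain n where "occ \<U> x \<subseteq> Cs n" by blast
    then have "occ \<W> x = occ \<U> x" using Wsub unfolding \<W>_def occ_def by blast
    then show ?thesis using occ_inf[OF t x] by simp
  next
    case False
    have step: "\<exists>V\<in>occ \<W> x. V \<notin> Cs n" for n
    proof -
      obtain V where V: "V \<in> occ \<U> x" "V \<notin> Cs n" using False by blast
      then have "x \<in> \<Union>(\<U> - Cs n)" unfolding occ_def by blast
      then obtain V' where V': "V' \<in> D (Cs n)" "x \<in> V'" using Dp(3)[of "Cs n"] by blast
      then have "V' \<notin> Cs n" "V' \<in> \<W>" "V' \<in> \<U>" using Dp(1)[of "Cs n"] CsS[of n] unfolding \<W>_def by blast+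
      then show ?thesis using V'(2) unfolding occ_def by blast
    qed
    show ?thesis
    proof
      assume "finite (occ \<W> x)"
      then obtain N where "occ \<W> x \<subseteq> Cs N" using bound[OF _ occ_sub] by blast
      then show False using step[of N] by blast
    qed
  qed
  have "\<W> \<in> T_covers X" using T_sub[OF U Wsub] inf by blast
  then show ?thesis using Wsub Wc by blast
qed

lemma split_gen:
  fixes CC :: "real set \<Rightarrow> real set set set" and I :: "'i set" and Xs :: "'i \<Rightarrow> real set"
  assumes H1: "\<And>Y \<V> W. \<V> \<in> CC Y \<Longrightarrow> W \<subseteq> \<V> \<Longrightarrow> \<forall>y\<in>Y. infinite (occ W y) \<Longrightarrow> W \<in> CC Y"
  and H2: "\<And>Y \<V>. \<V> \<in> CC Y \<Longrightarrow> tau_cover Y \<V>"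
  and H3: "\<And>Y Z \<V> \<T>. \<V> \<in> CC Z \<Longrightarrow> Y \<subseteq> Z \<Longrightarrow> tau_cover Y \<T> \<Longrightarrow> \<T> \<subseteq> (\<lambda>U. U \<inter> Y) ` \<V> \<Longrightarrow> \<T> \<in> CC Y"
  and red: "\<And>\<U>. \<U> \<in> CC X \<Longrightarrow> \<exists>\<W>\<subseteq>\<U>. countable \<W> \<and> \<W> \<in> CC X"
  and X: "X = (\<Union>\<alpha>\<in>I. Xs \<alpha>)" and Xne: "X \<noteq> {}"
  and bu: "below_u I" and sp: "\<forall>\<alpha>\<in>I. Split CC CC (Xs \<alpha>)"
  shows "Split CC CC X"
  unfolding Split_def
proof
  fix \<U> assume U: "\<U> \<in> CC X"
  obtain \<W> where W: "\<W> \<subseteq> \<U>" "countable \<W>" "\<W> \<in> CC X" using red[OF U] by blast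
  have ex: "\<exists>W\<subseteq>\<W>. \<forall>x\<in>X. infinite (occ W x) \<and> infinite (occ (\<W> - W) x)"
    by (rule main[where CC=CC and X=X and I=I and Xs=Xs, OF H2 H3 W(3) W(2) X Xne bu sp])
  then obtain W where Wp: "W \<subseteq> \<W>" "\<forall>x\<in>X. infinite (occ W x) \<and> infinite (occ (\<W> - W) x)"
    by blast
  have c1: "W \<in> CC X" using H1[OF W(3) Wp(1)] Wp(2) by blast
  have c2: "\<W> - W \<in> CC X" using H1[OF W(3), of "\<W> - W"] Wp(2) by blast
  have s1: "W \<subseteq> \<U>" "\<W> - W \<subseteq> \<U> - W" using W(1) Wp(1) by blast+
  show "\<exists>V1 V2. V1 \<inter> V2 = {} \<and> V1 \<union> V2 = \<U> \<and> (\<exists>W. W \<subseteq> V1 \<and> W \<in> CC X) \<and> (\<exists>W. W \<subseteq> V2 \<and> W \<in> CC X)"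
    apply (rule exI[of _ W], rule exI[of _ "\<U> - W"], intro conjI)
       apply blast
      apply (use s1 in blast)
     apply (rule exI[of _ W], use c1 in simp)
    by (rule exI[of _ "\<W> - W"], use c2 s1 in simp)
qed

theorem theorem6p4:
  fixes X :: "real set" and I :: "'i set" and Xs :: "'i \<Rightarrow> real set"
  assumes "infinite X" and "X = (\<Union>\<alpha>\<in>I. Xs \<alpha>)"
  shows
    "(below_u I \<and> (\<forall>\<alpha>\<in>I. Split T_covers T_covers (Xs \<alpha>)) \<longrightarrow> Split T_covers T_covers X) \<and>
     (below_u I \<and> (\<forall>\<alpha>\<in>I. Split BT_covers BT_covers (Xs \<alpha>)) \<longrightarrow> Split BT_covers BT_covers X) \<and>
     (below_u I \<and> (\<forall>\<alpha>\<in>I. Split CT_covers CT_covers (Xs \<alpha>)) \<longrightarrow> Split CT_covers CT_covers X) \<and>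
     (countable I \<and> (\<forall>\<alpha>\<in>I. Split T_covers T_covers (Xs \<alpha>)) \<longrightarrow> Split T_covers T_covers X) \<and>
     (countable I \<and> (\<forall>\<alpha>\<in>I. Split BT_covers BT_covers (Xs \<alpha>)) \<longrightarrow> Split BT_covers BT_covers X) \<and>
     (countable I \<and> (\<forall>\<alpha>\<in>I. Split CT_covers CT_covers (Xs \<alpha>)) \<longrightarrow> Split CT_covers CT_covers X)"
proof -
  have Xne: "X \<noteq> {}" using assms(1) by auto
  have T2: "\<And>Y \<V>. \<V> \<in> T_covers Y \<Longrightarrow> tau_cover Y \<V>" unfolding T_covers_def by blast
  have BT2: "\<And>Y \<V>. \<V> \<in> BT_covers Y \<Longrightarrow> tau_cover Y \<V>" unfolding BT_covers_def mem_Collect_eq by blast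
  have CT2: "\<And>Y \<V>. \<V> \<in> CT_covers Y \<Longrightarrow> tau_cover Y \<V>" unfolding CT_covers_def mem_Collect_eq by blast
  have Tred: "\<And>\<U>. \<U> \<in> T_covers X \<Longrightarrow> \<exists>\<W>\<subseteq>\<U>. countable \<W> \<and> \<W> \<in> T_covers X" by (rule lindelof_tau)
  have BTred: "\<And>\<U>. \<U> \<in> BT_covers X \<Longrightarrow> \<exists>\<W>\<subseteq>\<U>. countable \<W> \<and> \<W> \<in> BT_covers X"
    unfolding BT_covers_def mem_Collect_eq by blast
  have CTred: "\<And>\<U>. \<U> \<in> CT_covers X \<Longrightarrow> \<exists>\<W>\<subseteq>\<U>. countable \<W> \<and> \<W> \<in> CT_covers X"
    unfolding CT_covers_def mem_Collect_eq by blast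
  have gT: "below_u I \<Longrightarrow> \<forall>\<alpha>\<in>I. Split T_covers T_covers (Xs \<alpha>) \<Longrightarrow> Split T_covers T_covers X"
    by (rule split_gen[where CC=T_covers and X=X and I=I and Xs=Xs, OF T_sub T2 T_trace Tred assms(2) Xne])
  have gBT: "below_u I \<Longrightarrow> \<forall>\<alpha>\<in>I. Split BT_covers BT_covers (Xs \<alpha>) \<Longrightarrow> Split BT_covers BT_covers X"
    by (rule split_gen[where CC=BT_covers and X=X and I=I and Xs=Xs, OF BT_sub BT2 BT_trace BTred assms(2) Xne])
  have gCT: "below_u I \<Longrightarrow> \<forall>\<alpha>\<in>I. Split CT_covers CT_covers (Xs \<alpha>) \<Longrightarrow> Split CT_covers CT_covers X"
    by (rule split_gen[where CC=CT_covers and X=X and I=I and Xs=Xs, OF CT_sub CT2 CT_trace CTred assms(2) Xne])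
  show ?thesis using gT gBT gCT countable_below_u[of I] by blast
qed


end
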